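(* Let $S$ be a numerical semigroup of depth $q\ge 1$, with $\rho=qm-c$. For all $x,y\in S$, $$\delta(x+y)+q+1\ \ge\ \delta(x)+\delta(y)\ \ge\ \delta(x+y)+q-\min(\rho,1).$$
   Context: A numerical semigroup is a subset $S\subseteq\mathbb N$ containing $0$, closed under addition, with finite complement. Its multiplicity is $m=\min(S\setminus\{0\})$, its conductor is $c=\max(\mathbb Z\setminus S)+1$, its depth is $q=\lceil c/m\rceil$, and $\rho=qm-c\in[0,m)$. For $x\in S$, the depth $\delta(x)$ is the unique integer such that $x+\delta(x)m\in[c,c+m-1]$. *)

theory Defs
  imports Complex_Main
begin

definition numerical_semigroup :: "nat set \<Rightarrow> bool" where
  "numerical_semigroup S \<longleftrightarrow> 0 \<in> S \<and> (\<forall>a\<in>S. \<forall>b\<in>S. a + b \<in> S) \<and> finite (UNIV - S)"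

definition multiplicity :: "nat set \<Rightarrow> int" where
  "multiplicity S = int (Min (S - {0}))"

definition conductor :: "nat set \<Rightarrow> int" where
  "conductor S = (GREATEST z::int. z \<notin> int ` S) + 1"

definition depth :: "nat set \<Rightarrow> int" where
  "depth S = \<lceil>real_of_int (conductor S) / real_of_int (multiplicity S)\<rceil>"

definition rho :: "nat set \<Rightarrow> int" where
  "rho S = depth S * multiplicity S - conductor S"

definition elem_depth :: "nat set \<Rightarrow> nat \<Rightarrow> int" where
  "elem_depth S x = (THE d::int. conductor S \<le> int x + d * multiplicity S \<and>
       int x + d * multiplicity S \<le> conductor S + multiplicity S - 1)"

end

theory Submission
  imports Defs
begin

lemma ed_char:
  fixes m c :: int
  assumes "m > 0"
  shows "c \<le> int x + (THE d::int. c \<le> int x + d * m \<and> int x + d * m \<le> c + m - 1) * m \<and>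
         int x + (THE d::int. c \<le> int x + d * m \<and> int x + d * m \<le> c + m - 1) * m \<le> c + m - 1"
proof -
  define d where "d = (c + m - 1 - int x) div m"
  have r: "(c + m - 1 - int x) mod m \<ge> 0" "(c + m - 1 - int x) mod m < m"
    using assms by auto
  have e: "c + m - 1 - int x = d * m + (c + m - 1 - int x) mod m"
    unfolding d_def by simp
  have P: "c \<le> int x + d * m \<and> int x + d * m \<le> c + m - 1" using r e by linarith
  have U: "e = d" if h: "c \<le> int x + e * m \<and> int x + e * m \<le> c + m - 1" for e
  proof (rule ccontr)
    assume "e \<noteq> d"
    then consider "e + 1 \<le> d" | "d + 1 \<le> e" by linarith
    then show False
    proof cases
      case 1
      then have "(e + 1) * m \<le> d * m" using assms by (intro mult_right_mono) auto
      then have "e * m + m \<le> d * m" by (simp add: distrib_right)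
      then show False using h P by linarith
    next
      case 2
      then have "(d + 1) * m \<le> e * m" using assms by (intro mult_right_mono) auto
      then have "d * m + m \<le> e * m" by (simp add: distrib_right)
      then show False using h P by linarith
    qed
  qed
  have T: "(THE d::int. c \<le> int x + d * m \<and> int x + d * m \<le> c + m - 1) = d"
    by (rule the_equality, rule P, erule U)
  show ?thesis unfolding T by (rule P)
qed

lemma kbound:
  fixes k m :: int
  assumes "m > 0" "k * m < 2 * m" "k * m > - 2 * m"
  shows "k \<le> 1 \<and> k \<ge> -1"
proof -
  have "k < 2" using assms(2) assms(1) mult_less_cancel_right_pos by blast
  moreover have "k * m > (-2) * m" using assms(3) by simp
  then have "k > -2" using assms(1) mult_less_cancel_right_pos by blast
  ultimately show ?thesis by linarith
qed

lemma kpos: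
  fixes k m :: int
  assumes "m > 0" "k * m > - m"
  shows "k \<ge> 0"
proof -
  have "k * m > (-1) * m" using assms(2) by simp
  then have "k > -1" using assms(1) mult_less_cancel_right_pos by blast
  then show ?thesis by linarith
qed

theorem proposition2p5:
  fixes S :: "nat set" and x y :: nat
  assumes "numerical_semigroup S"
    and "depth S \<ge> 1"
    and "x \<in> S" and "y \<in> S"
  shows "elem_depth S (x + y) + depth S + 1 \<ge> elem_depth S x + elem_depth S y
       \<and> elem_depth S x + elem_depth S y \<ge> elem_depth S (x + y) + depth S - min (rho S) 1"
proof -
  define m where "m = multiplicity S"
  define c where "c = conductor S"
  define q where "q = depth S"
  have m0: "m \<ge> 0" unfolding m_def multiplicity_def by simp
  have qdef: "q = \<lceil>real_of_int c / real_of_int m\<rceil>" unfolding q_def depth_def c_def m_def ..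
  have mpos: "m > 0"
  proof (rule ccontr)
    assume "\<not> m > 0" then have "m = 0" using m0 by simp
    then have "q = 0" using qdef by simp
    then show False using assms(2) q_def by simp
  qed
  have q1: "real_of_int q \<ge> real_of_int c / real_of_int m" using qdef by simp
  have q2: "real_of_int q < real_of_int c / real_of_int m + 1" using qdef by linarith
  have mr: "real_of_int m > 0" using mpos by simp
  have "real_of_int (q * m) \<ge> real_of_int c" using q1 mr by (simp add: field_simps)
  then have qa: "q * m \<ge> c" by linarith
  have "real_of_int (q * m) < real_of_int (c + m)" using q2 mr by (simp add: field_simps)
  then have qb: "q * m < c + m" by linarith
  have rho: "rho S = q * m - c" unfolding rho_def q_def m_def c_def ..
  have ed: "\<And>z. elem_depth S z = (THE d::int. c \<le> int z + d * m \<and> int z + d * m \<le> c + m - 1)"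
    unfolding elem_depth_def c_def m_def ..
  define dx where "dx = elem_depth S x"
  define dy where "dy = elem_depth S y"
  define dz where "dz = elem_depth S (x + y)"
  have hx: "c \<le> int x + dx * m \<and> int x + dx * m \<le> c + m - 1"
    unfolding dx_def ed using ed_char[OF mpos] by blast
  have hy: "c \<le> int y + dy * m \<and> int y + dy * m \<le> c + m - 1"
    unfolding dy_def ed using ed_char[OF mpos] by blast
  have hz: "c \<le> int (x + y) + dz * m \<and> int (x + y) + dz * m \<le> c + m - 1"
    unfolding dz_def ed using ed_char[OF mpos] by blast
  define k where "k = dx + dy - dz - q"
  have km: "k * m = (int x + dx * m) + (int y + dy * m) - (int (x + y) + dz * m) - q * m"
    unfolding k_def by (simp add: algebra_simps)
  have "k * m < 2 * m" "k * m > - 2 * m" using km hx hy hz qa qb by linarith+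
  then have kb: "k \<le> 1 \<and> k \<ge> -1" using kbound mpos by blast
  have k0: "k \<ge> 0" if "rho S = 0"
  proof -
    have "k * m > - m" using km hx hy hz that rho by linarith
    then show ?thesis using kpos mpos by blast
  qed
  have "rho S \<ge> 0" using rho qa by simp
  then show ?thesis
    using kb k0 unfolding dx_def[symmetric] dy_def[symmetric] dz_def[symmetric] q_def[symmetric] k_def
    by (cases "rho S = 0") auto
qed

end
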